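(* For every integer $j\ge 1$ the following identities hold (in each sum the $m=0$ term uses $\zeta(0)=-\tfrac12$): (a) $\displaystyle (3^{1-2j}-1)\zeta(2j)=\frac{(-1)^j j(2\pi)^{2j}}{(2j)!\,3^{2j-1}}+(-1)^{j+1}(2\pi)^{2j}\sum_{m=0}^{j}\frac{(-1)^{m+1}}{(2j-2m)!\,2^{2m-1}\,3^{2j-2m}\,\pi^{2m}}\zeta(2m)$; (b) $\displaystyle (4^{1-2j}-2^{1-2j})\zeta(2j)=\frac{(-1)^j j(2\pi)^{2j}}{(2j)!\,4^{2j-1}}+(-1)^{j+1}(2\pi)^{2j}\sum_{m=0}^{j}\frac{(-1)^{m+1}}{(2j-2m)!\,2^{2m-1}\,4^{2j-2m}\,\pi^{2m}}\zeta(2m)$; (c) $\displaystyle (6^{1-2j}-3^{1-2j}-2^{1-2j}+1)\zeta(2j)=\frac{(-1)^j j(2\pi)^{2j}}{(2j)!\,6^{2j-1}}+(-1)^{j+1}(2\pi)^{2j}\sum_{m=0}^{j}\frac{(-1)^{m+1}}{(2j-2m)!\,2^{2m-1}\,6^{2j-2m}\,\pi^{2m}}\zeta(2m)$; (d) $\displaystyle -\frac{j}{12^{2j-1}}(1+7^{2j-1})+\sum_{m=0}^{j}\frac{(2j)!}{(2j-2m)!}\frac{(-1)^{m+1}}{2^{2m-1}\pi^{2m}}(1+7^{2j-2m})\frac{\zeta(2m)}{12^{2j-2m}}=\frac{(6^{1-2j}-3^{1-2j}-2^{1-2j}+1)(2j)!(-1)^{j+1}}{2^{4j-1}\pi^{2j}}\zeta(2j)$;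 (e) $\displaystyle -\frac{j}{8^{2j-1}}(1+5^{2j-1})+\sum_{m=0}^{j}\frac{(2j)!}{(2j-2m)!}\frac{(-1)^{m+1}}{2^{2m-1}\pi^{2m}}(1+5^{2j-2m})\frac{\zeta(2m)}{8^{2j-2m}}=\frac{(4^{1-2j}-2^{1-2j})(2j)!(-1)^{j+1}}{2^{4j-1}\pi^{2j}}\zeta(2j)$.
   Context: $\zeta$ denotes the Riemann zeta function (analytically continued), so $\zeta(0)=-1/2$. *)

theory Defs
  imports "HOL-Analysis.Analysis"
begin

text \<open>Riemann zeta function, needed here only at the points s = 2m (m a natural number).
  For s > 1 it is the Dirichlet series; at s = 0 the analytic continuation gives -1/2.
  Other arguments are never used in the statement.\<close>
definition zeta :: "real \<Rightarrow> real" where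
  "zeta s = (if s = 0 then - 1 / 2 else (\<Sum>n. 1 / (real (Suc n)) powr s))"

end

theory Submission
  imports Defs
begin

lemma Gamma_refl_real:
  fixes t :: real assumes "0 < t" "t < 1"
  shows "Gamma t * Gamma (1 - t) = pi / sin (pi * t)"
proof -
  have e1: "1 - complex_of_real t = of_real (1 - t)" by simp
  have e2: "sin (complex_of_real pi * of_real t) = of_real (sin (pi * t))"
    by (metis of_real_mult sin_of_real)
  have "Gamma (complex_of_real t) * Gamma (1 - complex_of_real t) = of_real pi / sin (of_real pi * of_real t)"
    by (rule Gamma_reflection_complex)
  hence "complex_of_real (Gamma t * Gamma (1 - t)) = of_real (pi / sin (pi * t))"
    unfolding e1 e2 by (simp only: Gamma_complex_of_real of_real_mult of_real_divide)
  thus ?thesis by (simp only: of_real_eq_iff)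
qed

lemma aux_solve:
  fixes A s c :: real
  assumes "pi / s * A = - (pi * (c * pi)) / s^2" "s \<noteq> 0"
  shows "A = - pi * (c / s)"
proof -
  have "A = (s / pi) * (pi / s * A)" using assms(2) by (simp add: field_simps)
  also have "\<dots> = - pi * (c / s)" using assms by (simp add: field_simps power2_eq_square)
  finally show ?thesis .
qed

lemma Digamma_refl_real:
  fixes x :: real assumes x: "0 < x" "x < 1"
  shows "Digamma x - Digamma (1 - x) = - pi * cot (pi * x)"
proof -
  have nz: "y \<notin> \<int>\<^sub>\<le>\<^sub>0" if "y > 0" for y :: real
    using that by (auto elim!: nonpos_Ints_cases)
  have sx: "sin (pi * x) \<noteq> 0"
  proof
    assume "sin (pi * x) = 0"
    then obtain n :: int where n: "x = of_int n" by (auto simp: sin_zero_iff_int2)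
    with x have "0 < n" "n < 1" by auto
    thus False by simp
  qed
  have d1: "((\<lambda>t. Gamma t * Gamma (1 - t)) has_field_derivative
      (Gamma x * Digamma x * Gamma (1 - x) + Gamma x * (Gamma (1 - x) * Digamma (1 - x) * (- 1)))) (at x)"
    using x nz[of x] nz[of "1-x"]
    by (auto intro!: derivative_eq_intros)
  have d2: "((\<lambda>t. pi / sin (pi * t)) has_field_derivative
      (- (pi * (cos (pi * x) * pi)) / (sin (pi * x))^2)) (at x)"
    using sx by (auto intro!: derivative_eq_intros simp: power2_eq_square)
  have d3: "((\<lambda>t. Gamma t * Gamma (1 - t)) has_field_derivative
      (- (pi * (cos (pi * x) * pi)) / (sin (pi * x))^2)) (at x)"
    by (rule has_field_derivative_transform_within_open[OF d2, of "{0<..<1}"]) (use x Gamma_refl_real in auto)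
  have eq: "Gamma x * Digamma x * Gamma (1 - x) + Gamma x * (Gamma (1 - x) * Digamma (1 - x) * (- 1))
      = - (pi * (cos (pi * x) * pi)) / (sin (pi * x))^2"
    using DERIV_unique[OF d1 d3] .
  have G: "Gamma x * Gamma (1 - x) = pi / sin (pi * x)" using Gamma_refl_real x by simp
  have "(Gamma x * Gamma (1 - x)) * (Digamma x - Digamma (1 - x)) = - (pi * (cos (pi * x) * pi)) / (sin (pi * x))^2"
    using eq by (simp add: algebra_simps)
  hence "pi / sin (pi * x) * (Digamma x - Digamma (1 - x)) = - (pi * (cos (pi * x) * pi)) / (sin (pi * x))^2"
    by (simp only: G)
  from aux_solve[OF this sx] show ?thesis by (simp add: cot_def)
qed

lemma cot_pf:
  fixes x :: real assumes x: "0 < x" "x < 1"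
  shows "(\<lambda>n. 2 * x / ((real n + 1)^2 - x^2)) sums (1 / x - pi * cot (pi * x))"
proof -
  have s1: "(\<lambda>k. inverse (real (Suc k)) - inverse (x + real k)) sums (Digamma x + euler_mascheroni)"
    using summable_Digamma[of x] x by (simp add: Digamma_def summable_sums)
  have s2: "(\<lambda>k. inverse (real (Suc k)) - inverse ((1 - x) + real k)) sums (Digamma (1 - x) + euler_mascheroni)"
    using summable_Digamma[of "1 - x"] x by (simp add: Digamma_def summable_sums)
  have s3: "(\<lambda>k. inverse (x + real k) - inverse (x + real (Suc k))) sums (inverse (x + real 0) - 0)"
    by (intro telescope_sums' filterlim_compose[OF tendsto_inverse_0]
              tendsto_add_filterlim_at_infinity[OF tendsto_const] tendsto_of_nat)
  have "(\<lambda>k. ((inverse (real (Suc k)) - inverse (x + real k)) - (inverse (real (Suc k)) - inverse ((1 - x) + real k)))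
          + (inverse (x + real k) - inverse (x + real (Suc k))))
       sums ((Digamma x + euler_mascheroni) - (Digamma (1 - x) + euler_mascheroni) + (inverse (x + real 0) - 0))"
    by (intro sums_add sums_diff s1 s2 s3)
  also have "(Digamma x + euler_mascheroni) - (Digamma (1 - x) + euler_mascheroni) + (inverse (x + real 0) - 0)
      = 1 / x - pi * cot (pi * x)"
    using Digamma_refl_real[OF x] by (simp add: field_simps)
  also have "(\<lambda>k. ((inverse (real (Suc k)) - inverse (x + real k)) - (inverse (real (Suc k)) - inverse ((1 - x) + real k)))
          + (inverse (x + real k) - inverse (x + real (Suc k)))) = (\<lambda>n. 2 * x / ((real n + 1)^2 - x^2))"
  proof
    fix k
    have a: "1 - x + real k > 0" "x + real (Suc k) > 0" "(real k + 1)^2 - x^2 > 0"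
      using x by (auto simp: power2_eq_square) (smt (verit) mult_strict_mono of_nat_0_le_iff)
    have "((inverse (real (Suc k)) - inverse (x + real k)) - (inverse (real (Suc k)) - inverse ((1 - x) + real k)))
          + (inverse (x + real k) - inverse (x + real (Suc k))) = inverse (1 - x + real k) - inverse (x + real (Suc k))"
      by (simp add: algebra_simps)
    also have "\<dots> = 2 * x / ((real k + 1)^2 - x^2)"
      using a by (simp add: field_simps power2_eq_square)
    finally show "((inverse (real (Suc k)) - inverse (x + real k)) - (inverse (real (Suc k)) - inverse ((1 - x) + real k)))
          + (inverse (x + real k) - inverse (x + real (Suc k))) = 2 * x / ((real k + 1)^2 - x^2)" .
  qed
  finally show ?thesis .
qed
lemma zeta_sums:
  assumes "m \<ge> 1"
  shows "(\<lambda>n. 1 / (real (Suc n))^(2*m)) sums zeta (2 * real m)"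
proof -
  have "summable (\<lambda>n. inverse (real n ^ (2*m)))"
    using inverse_power_summable[of "2*m"] assms by simp
  hence "summable (\<lambda>n. inverse (real (Suc n) ^ (2*m)))"
    by (subst summable_Suc_iff)
  hence s: "summable (\<lambda>n. 1 / (real (Suc n))^(2*m))" by (simp add: divide_inverse)
  have "zeta (2 * real m) = (\<Sum>n. 1 / (real (Suc n)) powr (real (2*m)))"
    using assms by (simp add: zeta_def)
  also have "\<dots> = (\<Sum>n. 1 / (real (Suc n))^(2*m))"
    by (intro suminf_cong, subst powr_realpow) auto
  finally show ?thesis using s by (simp add: sums_iff)
qed

lemma zeta_0: "zeta (2 * real 0) = - 1 / 2" by (simp add: zeta_def)

lemma zeta_series:
  fixes x :: real assumes x: "0 < x" "x < 1"
  shows "(\<lambda>m. zeta (2 * real m) * x^(2*m)) sums (- (pi * x / 2) * cot (pi * x))"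
proof -
  define f where "f = (\<lambda>(n::nat,m::nat). (x^2/(real n+1)^2)^(Suc m))"
  define S where "S = 1/2 - pi * x / 2 * cot (pi * x)"
  have x2: "x^2 < 1" using x by (simp add: power_less_one_iff abs_square_less_1)
  have rows: "((\<lambda>m. f (n,m)) has_sum (x^2/((real n+1)^2 - x^2))) UNIV" for n
  proof -
    define q where "q = x^2/(real n+1)^2"
    have n1: "(real n + 1)^2 \<ge> 1" by simp
    have n2: "x^2 < (real n+1)^2" using x2 n1 by linarith
    have q: "0 \<le> q" "q < 1" unfolding q_def using n2 by (auto simp: field_simps)
    have "(\<lambda>m. q * q^m) sums (q * (1 / (1 - q)))"
      by (intro sums_mult geometric_sums) (use q in auto)
    also have "q * (1 / (1 - q)) = x^2/((real n+1)^2 - x^2)"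
      unfolding q_def using x2 n1 by (simp add: field_simps)
    finally have "(\<lambda>m. f (n,m)) sums (x^2/((real n+1)^2 - x^2))"
      by (simp add: f_def q_def)
    thus ?thesis by (rule sums_nonneg_imp_has_sum) (use q in \<open>auto simp: f_def q_def\<close>)
  qed
  have g: "((\<lambda>n. x^2/((real n+1)^2 - x^2)) has_sum S) UNIV"
  proof -
    have "(\<lambda>n. x / 2 * (2 * x / ((real n + 1)^2 - x^2))) sums (x / 2 * (1 / x - pi * cot (pi * x)))"
      by (intro sums_mult cot_pf x)
    also have "(\<lambda>n. x / 2 * (2 * x / ((real n + 1)^2 - x^2))) = (\<lambda>n. x^2/((real n+1)^2 - x^2))"
      by (auto simp: power2_eq_square)
    also have "x / 2 * (1 / x - pi * cot (pi * x)) = S" using x by (simp add: S_def field_simps)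
    finally show ?thesis
    proof (rule sums_nonneg_imp_has_sum)
      fix n
      have "(real n + 1)^2 \<ge> 1" by simp
      hence "(real n + 1)^2 - x^2 > 0" using x2 by linarith
      thus "0 \<le> x^2/((real n+1)^2 - x^2)" by simp
    qed
  qed
  have sm: "f summable_on UNIV \<times> UNIV"
    by (rule summable_on_SigmaI[OF rows has_sum_imp_summable[OF g]]) (auto simp: f_def)
  have hs: "(f has_sum S) (UNIV \<times> UNIV)"
    by (rule has_sum_SigmaI[OF rows g sm])
  hence hs': "((\<lambda>(a,b). f (b,a)) has_sum S) (UNIV \<times> UNIV)"
    by (subst (asm) has_sum_swap)
  have cols: "((\<lambda>n. (\<lambda>(a,b). f (b,a)) (m,n)) has_sum (zeta (2 * real (Suc m)) * x^(2*Suc m))) UNIV" for m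
  proof -
    have "(\<lambda>n. x^(2*Suc m) * (1 / (real (Suc n))^(2*Suc m))) sums (x^(2*Suc m) * zeta (2 * real (Suc m)))"
      by (intro sums_mult zeta_sums) simp
    also have "(\<lambda>n. x^(2*Suc m) * (1 / (real (Suc n))^(2*Suc m))) = (\<lambda>n. (\<lambda>(a,b). f (b,a)) (m,n))"
      by (auto simp: f_def power_divide power_mult add.commute power2_eq_square mult.assoc)
    finally show ?thesis
      by (intro sums_nonneg_imp_has_sum) (auto simp: mult.commute f_def)
  qed
  have "((\<lambda>m. zeta (2 * real (Suc m)) * x^(2*Suc m)) has_sum S) UNIV"
    by (rule has_sum_SigmaD[OF hs' cols])
  hence "(\<lambda>m. zeta (2 * real (Suc m)) * x^(2*Suc m)) sums S"
    by (rule has_sum_imp_sums)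
  hence "(\<lambda>m. zeta (2 * real m) * x^(2*m)) sums (S + zeta (2 * real 0) * x^(2*0))"
    by (subst (asm) sums_Suc_iff)
  also have "S + zeta (2 * real 0) * x^(2*0) = - (pi * x / 2) * cot (pi * x)"
    by (simp add: S_def zeta_def)
  finally show ?thesis .
qed


lemma sin_nz: fixes v :: real assumes "v \<noteq> 0" "\<bar>v\<bar> < pi" shows "sin v \<noteq> 0"
proof
  assume "sin v = 0"
  then obtain n :: int where n: "v = of_int n * pi" by (auto simp: sin_zero_iff_int2)
  with assms have "n \<noteq> 0" "\<bar>of_int n\<bar> < (1::real)" by (auto simp: abs_mult)
  thus False by linarith
qed

lemma sin_add': "(a::real) + b = c \<Longrightarrow> sin c = sin a * cos b + cos a * sin b" by (drule sym) (simp add: sin_add)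
lemma cos_add': "(a::real) + b = c \<Longrightarrow> cos c = cos a * cos b - sin a * sin b" by (drule sym) (simp add: cos_add)

lemma cos_cos': "(a::real) - b = d \<Longrightarrow> a + b = e \<Longrightarrow> cos a * cos b = (cos d + cos e) / 2"
  using cos_times_cos[of a b] by simp
lemma sin_sin': "(a::real) - b = d \<Longrightarrow> a + b = e \<Longrightarrow> sin a * sin b = (cos d - cos e) / 2"
  using sin_times_sin[of a b] by simp

lemma trig_a:
  fixes u :: real
  assumes "sin u \<noteq> 0" "sin (3* u) \<noteq> 0"
  shows "cot u - cot (3* u) = 2 * sin (2* u) + 2 * cos (2* u) * cot (3* u)"
proof -
  define sn cs where "sn = sin u" and "cs = cos u"
  have p: "sn^2 + cs^2 = 1" by (simp add: sn_def cs_def)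
  have s2: "sin (2* u) = 2* sn* cs" by (simp add: sn_def cs_def sin_double)
  have c2: "cos (2* u) = cs^2 - sn^2" by (simp add: sn_def cs_def cos_double)
  have s3: "sin (3* u) = sn * (3* cs^2 - sn^2)"
    using sin_add'[of "2* u" u "3* u"] s2 c2 by (simp add: sn_def cs_def) (simp add: algebra_simps power2_eq_square)
  have c3: "cos (3* u) = cs * (cs^2 - 3* sn^2)"
    using cos_add'[of "2* u" u "3* u"] s2 c2 by (simp add: sn_def cs_def) (simp add: algebra_simps power2_eq_square)
  have nz: "sn \<noteq> 0" "3* cs^2 - sn^2 \<noteq> 0" using assms s3 by (auto simp: sn_def)
  show ?thesis
    unfolding cot_def s3 c3 s2 c2 using nz p
    apply (simp add: sn_def[symmetric] cs_def[symmetric] field_simps)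
    by algebra
qed

lemma trig_b:
  fixes u :: real
  assumes "sin u \<noteq> 0" "sin (2 * u) \<noteq> 0" "sin (4 * u) \<noteq> 0"
  shows "cot u - cot (2 * u) = 2 * sin (2 * u) + 2 * cos (2 * u) * cot (4 * u)"
proof -
  define sn cs where "sn = sin u" and "cs = cos u"
  have p: "sn^2 + cs^2 = 1" by (simp add: sn_def cs_def)
  have s2: "sin (2 * u) = 2 * sn * cs" by (simp add: sn_def cs_def sin_double)
  have c2: "cos (2 * u) = cs^2 - sn^2" by (simp add: sn_def cs_def cos_double)
  have s4: "sin (4 * u) = 2 * (2 * sn * cs) * (cs^2 - sn^2)"
    using sin_double[of "2 * u"] s2 c2 by simp
  have c4: "cos (4 * u) = (cs^2 - sn^2)^2 - (2 * sn * cs)^2"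
    using cos_double[of "2 * u"] s2 c2 by simp
  have nz: "sn \<noteq> 0" "cs \<noteq> 0" "cs^2 - sn^2 \<noteq> 0" using assms s2 s4 by (auto simp: sn_def)
  show ?thesis
    unfolding cot_def s4 c4 s2 c2 using nz p
    apply (simp add: sn_def[symmetric] cs_def[symmetric] field_simps)
    by algebra
qed

lemma trig_c:
  fixes u :: real
  assumes "sin u \<noteq> 0" "sin (2 * u) \<noteq> 0" "sin (3 * u) \<noteq> 0" "sin (6 * u) \<noteq> 0"
  shows "cot u - cot (2 * u) - cot (3 * u) + cot (6 * u) = 2 * sin (2 * u) + 2 * cos (2 * u) * cot (6 * u)"
proof -
  define sn cs where "sn = sin u" and "cs = cos u"
  have p: "sn^2 + cs^2 = 1" by (simp add: sn_def cs_def)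
  have s2: "sin (2 * u) = 2 * sn * cs" by (simp add: sn_def cs_def sin_double)
  have c2: "cos (2 * u) = cs^2 - sn^2" by (simp add: sn_def cs_def cos_double)
  have s3: "sin (3 * u) = sn * (3 * cs^2 - sn^2)"
    using sin_add'[of "2 * u" u "3 * u"] s2 c2 by (simp add: sn_def cs_def) (simp add: algebra_simps power2_eq_square)
  have c3: "cos (3 * u) = cs * (cs^2 - 3 * sn^2)"
    using cos_add'[of "2 * u" u "3 * u"] s2 c2 by (simp add: sn_def cs_def) (simp add: algebra_simps power2_eq_square)
  define S3 C3 where "S3 = sin (3 * u)" and "C3 = cos (3 * u)"
  have s6: "sin (6 * u) = 2 * S3 * C3"
    using sin_double[of "3 * u"] by (simp add: S3_def C3_def)
  have c6: "cos (6 * u) = C3^2 - S3^2"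
    using cos_double[of "3 * u"] by (simp add: S3_def C3_def)
  have nz: "sn \<noteq> 0" "cs \<noteq> 0" "S3 \<noteq> 0" "C3 \<noteq> 0"
    using assms s6 s2 by (auto simp: sn_def cs_def S3_def)
  have s3': "S3 = sn * (3 * cs^2 - sn^2)" "C3 = cs * (cs^2 - 3 * sn^2)" using s3 c3 by (simp_all add: S3_def C3_def)
  show ?thesis
    unfolding cot_def s6 c6 s2 c2 S3_def[symmetric] C3_def[symmetric] sn_def[symmetric] cs_def[symmetric]
    using nz
    apply (simp add: field_simps)
    using s3' p by algebra
qed

lemma trig_d:
  fixes u :: real
  assumes "sin (3 * u) \<noteq> 0" "sin (6 * u) \<noteq> 0"
  shows "sin (7 * u) + cot (6 * u) * (cos u + cos (7 * u)) = cot (3 * u) * cos u"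
proof -
  have A: "cos u + cos (7 * u) = 2 * cos (4 * u) * cos (3 * u)"
    using cos_cos'[of "4 * u" "3 * u" u "7 * u"] by simp
  have B: "sin (6 * u) = 2 * sin (3 * u) * cos (3 * u)"
    using sin_double[of "3 * u"] by simp
  have C: "sin (7 * u) * sin (3 * u) + cos (6 * u) * cos (4 * u) = cos (3 * u) * cos u"
    using sin_sin'[of "7 * u" "3 * u" "4 * u" "10 * u"] cos_cos'[of "6 * u" "4 * u" "2 * u" "10 * u"]
      cos_cos'[of "3 * u" u "2 * u" "4 * u"] by simp
  have nz: "cos (3 * u) \<noteq> 0" using assms B by auto
  show ?thesis
    unfolding cot_def A B using nz assms(1) C
    by (simp add: field_simps)
qed

lemma trig_e:
  fixes u :: real
  assumes "sin (2 * u) \<noteq> 0" "sin (4 * u) \<noteq> 0"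
  shows "sin (5 * u) + cot (4 * u) * (cos u + cos (5 * u)) = cot (2 * u) * cos u"
proof -
  have A: "cos u + cos (5 * u) = 2 * cos (3 * u) * cos (2 * u)"
    using cos_cos'[of "3 * u" "2 * u" u "5 * u"] by simp
  have B: "sin (4 * u) = 2 * sin (2 * u) * cos (2 * u)"
    using sin_double[of "2 * u"] by simp
  have C: "sin (5 * u) * sin (2 * u) + cos (4 * u) * cos (3 * u) = cos (2 * u) * cos u"
    using sin_sin'[of "5 * u" "2 * u" "3 * u" "7 * u"] cos_cos'[of "4 * u" "3 * u" u "7 * u"]
      cos_cos'[of "2 * u" u u "3 * u"] by simp
  have nz: "cos (2 * u) \<noteq> 0" using assms B by auto
  show ?thesis
    unfolding cot_def A B using nz assms(1) C
    by (simp add: field_simps)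
qed

definition hh :: "real \<Rightarrow> real" where
  "hh y = (if y = 0 then - 1 / 2 else - (y / 4) * cot (y / 2))"

lemma zeta_series_abs:
  fixes t :: real assumes t: "\<bar>t\<bar> < 1"
  shows "(\<lambda>m. zeta (2 * real m) * t^(2*m)) sums hh (2 * pi * t)"
proof (cases "t = 0")
  case True
  have "(\<lambda>m. zeta (2 * real m) * t^(2*m)) = (\<lambda>r. if r = 0 then - 1 / 2 else 0)"
    using True by (auto simp: zeta_def)
  moreover have "(\<lambda>r::nat. if r = 0 then - 1 / 2 else (0::real)) sums (- 1 / 2)"
    using sums_single[of 0 "\<lambda>_. - 1 / (2::real)"] by simp
  ultimately show ?thesis using True by (simp add: hh_def)
next
  case False
  show ?thesis
  proof (cases "t > 0")
    case True
    with zeta_series[of t] t have "(\<lambda>m. zeta (2 * real m) * t^(2*m)) sums (- (pi * t / 2) * cot (pi * t))"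
      by simp
    also have "- (pi * t / 2) * cot (pi * t) = hh (2 * pi * t)"
      using True by (simp add: hh_def)
    finally show ?thesis .
  next
    case f2: False
    with False have "0 < - t" "- t < 1" using t by auto
    from zeta_series[OF this] have "(\<lambda>m. zeta (2 * real m) * (-t)^(2*m)) sums (- (pi * (-t) / 2) * cot (pi * (-t)))" .
    also have "(\<lambda>m. zeta (2 * real m) * (-t)^(2*m)) = (\<lambda>m. zeta (2 * real m) * t^(2*m))"
      by (simp add: power_mult)
    also have "- (pi * (-t) / 2) * cot (pi * (-t)) = hh (2 * pi * t)"
      using False by (simp add: hh_def)
    finally show ?thesis .
  qed
qed

definition Wc :: "real \<Rightarrow> real fps" where
  "Wc c = Abs_fps (\<lambda>n. if even n then zeta (real n) * (c / (2 * pi))^n else 0)"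

lemma Wc_sums:
  fixes c x :: real assumes cx: "\<bar>c * x\<bar> < 2 * pi"
  shows "(\<lambda>n. fps_nth (Wc c) n * x^n) sums hh (c * x)"
proof -
  define t where "t = c * x / (2 * pi)"
  have t: "\<bar>t\<bar> < 1" using cx pi_gt_zero by (simp add: t_def abs_mult field_simps)
  have "(\<lambda>m. zeta (2 * real m) * t^(2*m)) sums hh (2 * pi * t)" by (rule zeta_series_abs[OF t])
  also have "2 * pi * t = c * x" by (simp add: t_def)
  also have "(\<lambda>m. zeta (2 * real m) * t^(2*m)) = (\<lambda>m. fps_nth (Wc c) (2 * m) * x^(2 * m))"
    by (auto simp: Wc_def t_def power_mult_distrib power_divide)
  finally have "(\<lambda>m. (\<lambda>n. fps_nth (Wc c) n * x^n) (2 * m)) sums hh (c * x)" .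
  moreover have "strict_mono (\<lambda>m::nat. 2 * m)" by (auto simp: strict_mono_def)
  moreover have "fps_nth (Wc c) n * x^n = 0" if "n \<notin> range (\<lambda>m::nat. 2 * m)" for n
  proof -
    have "odd n" using that by (auto elim!: evenE)
    thus ?thesis by (simp add: Wc_def)
  qed
  ultimately show ?thesis using sums_mono_reindex[of "\<lambda>m::nat. 2 * m" "\<lambda>n. fps_nth (Wc c) n * x^n"] by blast
qed

lemma Wc_eval: "\<bar>c * x\<bar> < 2 * pi \<Longrightarrow> eval_fps (Wc c) x = hh (c * x)"
  unfolding eval_fps_def using Wc_sums sums_unique by metis

lemma Wc_radius:
  assumes "c \<noteq> 0"
  shows "ereal (pi / \<bar>c\<bar>) \<le> fps_conv_radius (Wc c)"
proof -
  have "\<bar>c * (pi / \<bar>c\<bar>)\<bar> < 2 * pi" using assms pi_gt_zero by (simp add: abs_mult)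
  from Wc_sums[OF this] have "summable (\<lambda>n. fps_nth (Wc c) n * (pi / \<bar>c\<bar>)^n)"
    by (rule sums_summable)
  from conv_radius_geI[OF this] show ?thesis
    using pi_gt_zero by (simp add: fps_conv_radius_def)
qed

lemma fps_real_zero:
  fixes F :: "real fps"
  assumes R: "fps_conv_radius F > 0" and r: "r > 0" and ev: "\<And>x. \<bar>x\<bar> < r \<Longrightarrow> eval_fps F x = 0"
  shows "F = 0"
proof (rule ccontr)
  assume F: "F \<noteq> 0"
  define k where "k = subdegree F"
  have Fk: "fps_nth F k \<noteq> 0" using F by (simp add: k_def)
  define E where "E = fps_shift k F"
  obtain d where d: "0 < ereal d" "ereal d < fps_conv_radius F"
    using ereal_dense2[OF R] by (auto simp: zero_ereal_def)
  define e where "e = min r d"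
  have e: "e > 0" using d r by (simp add: e_def)
  have evE': "eval_fps E x = 0" if xx: "x \<noteq> 0" "\<bar>x\<bar> < e" for x :: real
  proof -
    from xx have x: "x \<noteq> 0" "\<bar>x\<bar> < r" "\<bar>x\<bar> < d" by (auto simp: e_def)
    have "ereal (norm x) < ereal d" using x(3) by simp
    hence "norm x < fps_conv_radius F" using d(2) by (rule less_trans)
    hence "eval_fps E x = eval_fps F x / x^k"
      using x by (simp add: E_def eval_fps_shift k_def)
    also have "\<dots> = 0" using ev x by simp
    finally show "eval_fps E x = 0" .
  qed
  have evE: "eventually (\<lambda>x. eval_fps E x = 0) (at (0::real))"
    unfolding eventually_at using e evE' by (auto simp: dist_real_def intro!: exI[of _ e])
  have "norm (0::real) < fps_conv_radius E" using R by (simp add: E_def zero_ereal_def)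
  hence "isCont (eval_fps E) 0" by (rule continuous_eval_fps)
  hence lim: "(eval_fps E \<longlongrightarrow> eval_fps E 0) (at 0)" by (simp add: isCont_def)
  have lim0: "(eval_fps E \<longlongrightarrow> 0) (at (0::real))"
    by (rule Lim_transform_eventually[OF tendsto_const]) (use evE in \<open>rule eventually_mono, simp\<close>)
  have "eval_fps E 0 = 0" using tendsto_unique[OF _ lim lim0] by simp
  hence "fps_nth F k = 0" by (simp add: E_def eval_fps_at_0)
  with Fk show False by contradiction
qed

lemma fps_real_eq:
  fixes F G :: "real fps"
  assumes "ereal r \<le> fps_conv_radius F" "ereal r \<le> fps_conv_radius G" "r > 0"
    and "\<And>x. \<bar>x\<bar> < r \<Longrightarrow> eval_fps F x = eval_fps G x"
  shows "F = G"
proof -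
  have "ereal r \<le> min (fps_conv_radius F) (fps_conv_radius G)" using assms by simp
  also have "\<dots> \<le> fps_conv_radius (F - G)" by (rule fps_conv_radius_diff)
  finally have R: "ereal r \<le> fps_conv_radius (F - G)" .
  have "F - G = 0"
  proof (rule fps_real_zero[OF _ assms(3)])
    have "0 < ereal r" using assms(3) by simp
    thus "0 < fps_conv_radius (F - G)" using R by (rule order.strict_trans2)
    fix x :: real assume x: "\<bar>x\<bar> < r"
    have xr: "ereal (norm x) < ereal r" using x by simp
    have "norm x < fps_conv_radius F" using xr assms(1) by (rule order.strict_trans2)
    moreover have "norm x < fps_conv_radius G" using xr assms(2) by (rule order.strict_trans2)
    ultimately
    show "eval_fps (F - G) x = 0" using assms(4)[OF x] by (simp add: eval_fps_diff)
  qed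
  thus ?thesis by simp
qed


lemma hh_0: "hh 0 = - 1 / 2" by (simp add: hh_def)

lemma hh_nz: "y \<noteq> 0 \<Longrightarrow> hh y = - (y / 4) * cot (y / 2)" by (simp add: hh_def)

lemma id_a:
  fixes x :: real assumes x: "\<bar>x\<bar> < pi"
  shows "3 * hh (x / 3) - hh x = - 1 / 2 * (x * sin (x / 3)) + 2 * (cos (x / 3) * hh x)"
proof (cases "x = 0")
  case True thus ?thesis by (simp add: hh_0)
next
  case False
  define u where "u = x / 6"
  have xu: "x = 6 * u" by (simp add: u_def)
  have u: "u \<noteq> 0" "\<bar>u\<bar> < pi / 6" using False x by (auto simp: u_def)
  have n1: "sin u \<noteq> 0" by (rule sin_nz) (use u in auto)
  have n3: "sin (3 * u) \<noteq> 0" by (rule sin_nz) (use u in auto)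
  have t: "cot u - cot (3 * u) = 2 * sin (2 * u) + 2 * cos (2 * u) * cot (3 * u)"
    by (rule trig_a[OF n1 n3])
  have "3 * hh (x / 3) - hh x = - (3 * u / 2) * (cot u - cot (3 * u))"
    using u by (simp add: xu hh_nz field_simps)
  also have "\<dots> = - 1 / 2 * (x * sin (x / 3)) + 2 * (cos (x / 3) * hh x)"
    unfolding t using u by (simp add: xu hh_nz algebra_simps)
  finally show ?thesis .
qed

lemma id_b:
  fixes x :: real assumes x: "\<bar>x\<bar> < pi"
  shows "4 * hh (x / 4) - 2 * hh (x / 2) = - 1 / 2 * (x * sin (x / 4)) + 2 * (cos (x / 4) * hh x)"
proof (cases "x = 0")
  case True thus ?thesis by (simp add: hh_0)
next
  case False
  define u where "u = x / 8"
  have xu: "x = 8 * u" by (simp add: u_def)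
  have u: "u \<noteq> 0" "\<bar>u\<bar> < pi / 8" using False x by (auto simp: u_def)
  have n1: "sin u \<noteq> 0" by (rule sin_nz) (use u in auto)
  have n2: "sin (2 * u) \<noteq> 0" by (rule sin_nz) (use u in auto)
  have n4: "sin (4 * u) \<noteq> 0" by (rule sin_nz) (use u in auto)
  have t: "cot u - cot (2 * u) = 2 * sin (2 * u) + 2 * cos (2 * u) * cot (4 * u)"
    by (rule trig_b[OF n1 n2 n4])
  have "4 * hh (x / 4) - 2 * hh (x / 2) = - (2 * u) * (cot u - cot (2 * u))"
    using u by (simp add: xu hh_nz field_simps)
  also have "\<dots> = - 1 / 2 * (x * sin (x / 4)) + 2 * (cos (x / 4) * hh x)"
    unfolding t using u by (simp add: xu hh_nz field_simps)
  finally show ?thesis .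
qed

lemma id_c:
  fixes x :: real assumes x: "\<bar>x\<bar> < pi"
  shows "6 * hh (x / 6) - 3 * hh (x / 3) - 2 * hh (x / 2) + hh x = - 1 / 2 * (x * sin (x / 6)) + 2 * (cos (x / 6) * hh x)"
proof (cases "x = 0")
  case True thus ?thesis by (simp add: hh_0)
next
  case False
  define u where "u = x / 12"
  have xu: "x = 12 * u" by (simp add: u_def)
  have u: "u \<noteq> 0" "\<bar>u\<bar> < pi / 12" using False x by (auto simp: u_def)
  have n1: "sin u \<noteq> 0" by (rule sin_nz) (use u in auto)
  have n2: "sin (2 * u) \<noteq> 0" by (rule sin_nz) (use u in auto)
  have n3: "sin (3 * u) \<noteq> 0" by (rule sin_nz) (use u in auto)
  have n6: "sin (6 * u) \<noteq> 0" by (rule sin_nz) (use u in auto)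
  have t: "cot u - cot (2 * u) - cot (3 * u) + cot (6 * u) = 2 * sin (2 * u) + 2 * cos (2 * u) * cot (6 * u)"
    by (rule trig_c[OF n1 n2 n3 n6])
  have "6 * hh (x / 6) - 3 * hh (x / 3) - 2 * hh (x / 2) + hh x = - (3 * u) * (cot u - cot (2 * u) - cot (3 * u) + cot (6 * u))"
    using u by (simp add: xu hh_nz field_simps)
  also have "\<dots> = - 1 / 2 * (x * sin (x / 6)) + 2 * (cos (x / 6) * hh x)"
    unfolding t using u by (simp add: xu hh_nz field_simps)
  finally show ?thesis .
qed

lemma id_d:
  fixes x :: real assumes x: "\<bar>x\<bar> < pi"
  shows "x / 2 * (sin (x / 12) + sin (7 * x / 12)) - 2 * (hh x * (cos (x / 12) + cos (7 * x / 12)))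
    = - 2 * (6 * hh (x / 12) - 3 * hh (x / 6) - 2 * hh (x / 4) + hh (x / 2))"
proof (cases "x = 0")
  case True thus ?thesis by (simp add: hh_0)
next
  case False
  have c: "6 * hh (x / 2 / 6) - 3 * hh (x / 2 / 3) - 2 * hh (x / 2 / 2) + hh (x / 2)
     = - 1 / 2 * (x / 2 * sin (x / 2 / 6)) + 2 * (cos (x / 2 / 6) * hh (x / 2))"
    by (rule id_c) (use x in auto)
  define u where "u = x / 12"
  have xu: "x = 12 * u" by (simp add: u_def)
  have u: "u \<noteq> 0" "\<bar>u\<bar> < pi / 12" using False x by (auto simp: u_def)
  have n3: "sin (3 * u) \<noteq> 0" by (rule sin_nz) (use u in auto)
  have n6: "sin (6 * u) \<noteq> 0" by (rule sin_nz) (use u in auto)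
  have t: "sin (7 * u) + cot (6 * u) * (cos u + cos (7 * u)) = cot (3 * u) * cos u"
    by (rule trig_d[OF n3 n6])
  have e: "x / 2 * sin (7 * x / 12) - 2 * (hh x * (cos (x / 12) + cos (7 * x / 12))) = - 4 * (cos (x / 12) * hh (x / 2))"
  proof -
    have "x / 2 * sin (7 * x / 12) - 2 * (hh x * (cos (x / 12) + cos (7 * x / 12)))
        = 6 * u * (sin (7 * u) + cot (6 * u) * (cos u + cos (7 * u)))"
      using u by (simp add: xu hh_nz field_simps)
    also have "\<dots> = 6 * u * (cot (3 * u) * cos u)" by (simp only: t)
    also have "\<dots> = - 4 * (cos (x / 12) * hh (x / 2))"
      using u by (simp add: xu hh_nz field_simps)
    finally show ?thesis .
  qed
  have "x / 2 * (sin (x / 12) + sin (7 * x / 12)) - 2 * (hh x * (cos (x / 12) + cos (7 * x / 12)))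
     = x / 2 * sin (x / 12) + (x / 2 * sin (7 * x / 12) - 2 * (hh x * (cos (x / 12) + cos (7 * x / 12))))"
    by (simp add: algebra_simps)
  also have "\<dots> = x / 2 * sin (x / 12) - 4 * (cos (x / 12) * hh (x / 2))" by (simp only: e)
  also have "\<dots> = - 2 * (6 * hh (x / 12) - 3 * hh (x / 6) - 2 * hh (x / 4) + hh (x / 2))"
    using c by simp
  finally show ?thesis .
qed

lemma id_e:
  fixes x :: real assumes x: "\<bar>x\<bar> < pi"
  shows "x / 2 * (sin (x / 8) + sin (5 * x / 8)) - 2 * (hh x * (cos (x / 8) + cos (5 * x / 8)))
    = - 2 * (4 * hh (x / 8) - 2 * hh (x / 4))"
proof (cases "x = 0")
  case True thus ?thesis by (simp add: hh_0)
next
  case False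
  have c: "4 * hh (x / 2 / 4) - 2 * hh (x / 2 / 2) = - 1 / 2 * (x / 2 * sin (x / 2 / 4)) + 2 * (cos (x / 2 / 4) * hh (x / 2))"
    by (rule id_b) (use x in auto)
  define u where "u = x / 8"
  have xu: "x = 8 * u" by (simp add: u_def)
  have u: "u \<noteq> 0" "\<bar>u\<bar> < pi / 8" using False x by (auto simp: u_def)
  have n2: "sin (2 * u) \<noteq> 0" by (rule sin_nz) (use u in auto)
  have n4: "sin (4 * u) \<noteq> 0" by (rule sin_nz) (use u in auto)
  have t: "sin (5 * u) + cot (4 * u) * (cos u + cos (5 * u)) = cot (2 * u) * cos u"
    by (rule trig_e[OF n2 n4])
  have e: "x / 2 * sin (5 * x / 8) - 2 * (hh x * (cos (x / 8) + cos (5 * x / 8))) = - 4 * (cos (x / 8) * hh (x / 2))"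
  proof -
    have "x / 2 * sin (5 * x / 8) - 2 * (hh x * (cos (x / 8) + cos (5 * x / 8)))
        = 4 * u * (sin (5 * u) + cot (4 * u) * (cos u + cos (5 * u)))"
      using u by (simp add: xu hh_nz field_simps)
    also have "\<dots> = 4 * u * (cot (2 * u) * cos u)" by (simp only: t)
    also have "\<dots> = - 4 * (cos (x / 8) * hh (x / 2))"
      using u by (simp add: xu hh_nz field_simps)
    finally show ?thesis .
  qed
  have "x / 2 * (sin (x / 8) + sin (5 * x / 8)) - 2 * (hh x * (cos (x / 8) + cos (5 * x / 8)))
     = x / 2 * sin (x / 8) + (x / 2 * sin (5 * x / 8) - 2 * (hh x * (cos (x / 8) + cos (5 * x / 8))))"
    by (simp add: algebra_simps)
  also have "\<dots> = x / 2 * sin (x / 8) - 4 * (cos (x / 8) * hh (x / 2))" by (simp only: e)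
  also have "\<dots> = - 2 * (4 * hh (x / 8) - 2 * hh (x / 4))"
    using c by simp
  finally show ?thesis .
qed


lemma rad_mult: "ereal r \<le> fps_conv_radius f \<Longrightarrow> ereal r \<le> fps_conv_radius g \<Longrightarrow> ereal r \<le> fps_conv_radius (f * g)"
  using fps_conv_radius_mult[of f g] by (meson min.boundedI order_trans)
lemma rad_add: "ereal r \<le> fps_conv_radius f \<Longrightarrow> ereal r \<le> fps_conv_radius g \<Longrightarrow> ereal r \<le> fps_conv_radius (f + g)"
  using fps_conv_radius_add[of f g] by (meson min.boundedI order_trans)
lemma rad_diff: "ereal r \<le> fps_conv_radius f \<Longrightarrow> ereal r \<le> fps_conv_radius g \<Longrightarrow> ereal r \<le> fps_conv_radius (f - g)"
  using fps_conv_radius_diff[of f g] by (meson min.boundedI order_trans)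
lemma rad_const: "ereal r \<le> fps_conv_radius (fps_const (c::real))" by simp
lemma rad_X: "ereal r \<le> fps_conv_radius (fps_X :: real fps)" by simp
lemma rad_sin: "ereal r \<le> fps_conv_radius (fps_sin (c::real))" by simp
lemma rad_cos: "ereal r \<le> fps_conv_radius (fps_cos (c::real))" by simp
lemma rad_Wc: "c \<noteq> 0 \<Longrightarrow> \<bar>c\<bar> \<le> 1 \<Longrightarrow> ereal pi \<le> fps_conv_radius (Wc c)"
proof -
  assume c: "c \<noteq> 0" "\<bar>c\<bar> \<le> 1"
  have "pi \<le> pi / \<bar>c\<bar>" using c pi_gt_zero by (simp add: field_simps)
  hence "ereal pi \<le> ereal (pi / \<bar>c\<bar>)" by simp
  also have "\<dots> \<le> fps_conv_radius (Wc c)" by (rule Wc_radius[OF c(1)])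
  finally show ?thesis .
qed

lemmas rad_intros = rad_mult rad_add rad_diff rad_const rad_X rad_sin rad_cos rad_Wc

lemma lt_rad: "ereal pi \<le> fps_conv_radius f \<Longrightarrow> \<bar>x\<bar> < pi \<Longrightarrow> norm (x::real) < fps_conv_radius f"
  by (rule order.strict_trans2[of _ "ereal pi"]) auto

lemma Wc_eval': "\<bar>x\<bar> < pi \<Longrightarrow> \<bar>c\<bar> \<le> 1 \<Longrightarrow> eval_fps (Wc c) x = hh (c * x)"
proof (rule Wc_eval)
  assume x: "\<bar>x\<bar> < pi" and c: "\<bar>c\<bar> \<le> 1"
  have "\<bar>c\<bar> * \<bar>x\<bar> \<le> 1 * \<bar>x\<bar>" by (rule mult_right_mono) (use c in auto)
  thus "\<bar>c * x\<bar> < 2 * pi" using x pi_gt_zero by (simp add: abs_mult)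
qed

lemma ev_mult: "ereal pi \<le> fps_conv_radius f \<Longrightarrow> ereal pi \<le> fps_conv_radius g \<Longrightarrow> \<bar>x\<bar> < pi
  \<Longrightarrow> eval_fps (f * g) x = eval_fps f x * eval_fps (g :: real fps) x"
  by (intro eval_fps_mult lt_rad)
lemma ev_add: "ereal pi \<le> fps_conv_radius f \<Longrightarrow> ereal pi \<le> fps_conv_radius g \<Longrightarrow> \<bar>x\<bar> < pi
  \<Longrightarrow> eval_fps (f + g) x = eval_fps f x + eval_fps (g :: real fps) x"
  by (intro eval_fps_add lt_rad)
lemma ev_diff: "ereal pi \<le> fps_conv_radius f \<Longrightarrow> ereal pi \<le> fps_conv_radius g \<Longrightarrow> \<bar>x\<bar> < pi
  \<Longrightarrow> eval_fps (f - g) x = eval_fps f x - eval_fps (g :: real fps) x"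
  by (intro eval_fps_diff lt_rad)

definition FA_L where "FA_L = fps_const 3 * Wc (1/3) - Wc 1"
definition FA_R where "FA_R = fps_const (- 1 / 2) * (fps_X * fps_sin (1/3)) + fps_const 2 * (fps_cos (1/3) * Wc 1)"

lemma FA: "FA_L = FA_R"
proof (rule fps_real_eq[of pi])
  show "ereal pi \<le> fps_conv_radius FA_L" unfolding FA_L_def by (intro rad_intros) auto
  show "ereal pi \<le> fps_conv_radius FA_R" unfolding FA_R_def by (intro rad_intros) auto
  fix x :: real assume x: "\<bar>x\<bar> < pi"
  have R: "ereal pi \<le> fps_conv_radius (Wc c)" if "c \<noteq> 0" "\<bar>c\<bar> \<le> 1" for c using rad_Wc that .
  show "eval_fps FA_L x = eval_fps FA_R x"
    unfolding FA_L_def FA_R_def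
    using x id_a[OF x]
    by (simp add: ev_mult ev_add ev_diff rad_intros Wc_eval')
qed (use pi_gt_zero in auto)

lemma sum_even:
  fixes f :: "nat \<Rightarrow> real" and j :: nat
  assumes "\<And>i. odd i \<Longrightarrow> f i = (0::real)"
  shows "(\<Sum>i=0..2*j. f i) = (\<Sum>m=0..j. f (2*m))"
proof (induction j)
  case 0 thus ?case by simp
next
  case (Suc j)
  have "2 * Suc j = Suc (Suc (2 * j))" by simp
  hence "(\<Sum>i=0..2 * Suc j. f i) = (\<Sum>i=0..2*j. f i) + f (Suc (2*j)) + f (Suc (Suc (2*j)))"
    by (simp add: sum.atLeast0_atMost_Suc)
  also have "f (Suc (2*j)) = 0" by (rule assms) simp
  finally show ?case using Suc.IH by (simp add: sum.atLeast0_atMost_Suc)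
qed

lemma Wc_nth: "fps_nth (Wc c) (2*m) = zeta (2 * real m) * (c/(2*pi))^(2*m)"
  by (simp add: Wc_def)

lemma Wc_nth_odd: "odd n \<Longrightarrow> fps_nth (Wc c) n = 0"
  by (simp add: Wc_def)

lemma coeff_CW:
  "fps_nth (fps_cos a * Wc c) (2*j) = (\<Sum>m=0..j. (-1)^(j-m) * a^(2*j-2*m) / fact (2*j-2*m) * (zeta (2 * real m) * (c/(2*pi))^(2*m)))"
proof -
  have "fps_nth (fps_cos a * Wc c) (2*j) = fps_nth (Wc c * fps_cos a) (2*j)" by (simp add: mult.commute)
  also have "\<dots> = (\<Sum>i=0..2*j. fps_nth (Wc c) i * fps_nth (fps_cos a) (2*j - i))" by (rule fps_mult_nth)
  also have "\<dots> = (\<Sum>m=0..j. fps_nth (Wc c) (2*m) * fps_nth (fps_cos a) (2*j - 2*m))"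
    by (rule sum_even) (simp add: Wc_nth_odd)
  also have "\<dots> = (\<Sum>m=0..j. (-1)^(j-m) * a^(2*j-2*m) / fact (2*j-2*m) * (zeta (2 * real m) * (c/(2*pi))^(2*m)))"
  proof (rule sum.cong)
    fix m assume m: "m \<in> {0..j}"
    have e: "2*j - 2*m = 2*(j-m)" by simp
    have "fps_nth (fps_cos a) (2*j - 2*m) = (-1)^(j-m) * a^(2*j-2*m) / fact (2*j-2*m)"
      unfolding e by (simp add: fps_cos_def)
    thus "fps_nth (Wc c) (2*m) * fps_nth (fps_cos a) (2*j - 2*m) = (-1)^(j-m) * a^(2*j-2*m) / fact (2*j-2*m) * (zeta (2 * real m) * (c/(2*pi))^(2*m))"
      by (simp add: Wc_nth)
  qed simp
  finally show ?thesis .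
qed

lemma coeff_Xsin:
  fixes a :: real
  assumes "j \<ge> 1"
  shows "fps_nth (fps_X * fps_sin a) (2*j) = (-1)^(j-1) * a^(2*j-1) / fact (2*j-1)"
proof -
  obtain k where k: "j = Suc k" using assms by (cases j) auto
  have e: "2*j - 1 = Suc (2*k)" using k by simp
  show ?thesis using k by (simp add: fps_sin_def e algebra_simps)
qed

lemma powi2: "(2::real) powi (2 * int m - 1) = 2^(2*m) / 2"
proof -
  have e: "2 * int m - 1 = int (2*m) - 1" by simp
  have "(2::real) powi (int (2*m) - 1) = 2 powi (int (2*m)) / 2 powi 1"
    by (rule power_int_diff) simp
  thus ?thesis unfolding e by (simp only: power_int_of_nat power_int_1_right)
qed

lemma powi_1m: "(a::real) \<noteq> 0 \<Longrightarrow> a powi (1 - 2 * int j) = a / a^(2*j)"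
proof -
  assume a: "a \<noteq> 0"
  have e: "1 - 2 * int j = 1 - int (2*j)" by simp
  have "a powi (1 - int (2*j)) = a powi 1 / a powi (int (2*j))"
    by (rule power_int_diff) (use a in auto)
  thus ?thesis unfolding e by (simp only: power_int_of_nat power_int_1_right)
qed

lemma sign_lem: "m \<le> j \<Longrightarrow> (-1::real)^(j-m) = (-1)^(j+1) * (-1)^(m+1)"
proof -
  assume m: "m \<le> j"
  then obtain d where jd: "j = m + d" using le_Suc_ex by blast
  have "(-1::real)^(j+1) * (-1)^(m+1) = (-1)^(j+1+(m+1))" by (simp add: power_add)
  also have "j+1+(m+1) = d + 2*(m+1)" using jd by simp
  also have "(-1::real)^(d + 2*(m+1)) = (-1)^d" by (simp add: power_add power_mult)
  finally show ?thesis using jd by simp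
qed

lemma final_abc:
  fixes A a :: real and j :: nat
  assumes j: "j \<ge> 1" and a: "a > 0"
  assumes hyp: "A * zeta (2 * real j) * (1/(2*pi))^(2*j) =
      - 1 / 2 * ((-1)^(j-1) * (1/a)^(2*j-1) / fact (2*j-1))
      + 2 * (\<Sum>m=0..j. (-1)^(j-m) * (1/a)^(2*j-2*m) / fact (2*j-2*m) * (zeta (2 * real m) * (1/(2*pi))^(2*m)))"
  shows "A * zeta (2 * j) =
      (-1) ^ j * real j * (2 * pi) ^ (2 * j) / (fact (2 * j) * a ^ (2 * j - 1))
      + (-1) ^ (j + 1) * (2 * pi) ^ (2 * j) *
        (\<Sum>m = 0..j. (-1) ^ (m + 1) /
           (fact (2 * j - 2 * m) * (2::real) powi (2 * int m - 1) * a ^ (2 * j - 2 * m) * pi ^ (2 * m))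
           * zeta (2 * m))"
proof -
  define P where "P = (2 * pi)^(2*j)"
  have P: "P \<noteq> 0" by (simp add: P_def)
  have "A * zeta (2 * real j) = P * (A * zeta (2 * real j) * (1/(2*pi))^(2*j))"
    by (simp add: P_def power_one_over)
  also have "\<dots> = P * (- 1 / 2 * ((-1)^(j-1) * (1/a)^(2*j-1) / fact (2*j-1)))
      + P * 2 * (\<Sum>m=0..j. (-1)^(j-m) * (1/a)^(2*j-2*m) / fact (2*j-2*m) * (zeta (2 * real m) * (1/(2*pi))^(2*m)))"
    unfolding hyp by (simp add: algebra_simps)
  also have "P * (- 1 / 2 * ((-1)^(j-1) * (1/a)^(2*j-1) / fact (2*j-1)))
      = (-1) ^ j * real j * P / (fact (2 * j) * a ^ (2 * j - 1))"
  proof -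
    have f: "(fact (2*j) :: real) = of_nat (2*j) * fact (2*j - 1)" by (rule fact_reduce) (use j in simp)
    have s1: "(-1::real)^(j-1) = -((-1)^j)"
    proof -
      obtain k where k: "j = Suc k" using j by (cases j) auto
      thus ?thesis by simp
    qed
    define F where "F = (fact (2*j - 1) :: real)"
    define Q where "Q = a^(2*j-1)"
    have nz: "F \<noteq> 0" "Q \<noteq> 0" "real j \<noteq> 0" using a j by (auto simp: F_def Q_def)
    show ?thesis unfolding f s1 power_one_over F_def[symmetric] Q_def[symmetric] using nz
      by (simp add: field_simps)
  qed
  also have "P * 2 * (\<Sum>m=0..j. (-1)^(j-m) * (1/a)^(2*j-2*m) / fact (2*j-2*m) * (zeta (2 * real m) * (1/(2*pi))^(2*m)))
      = (-1) ^ (j + 1) * P *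
        (\<Sum>m = 0..j. (-1) ^ (m + 1) /
           (fact (2 * j - 2 * m) * (2::real) powi (2 * int m - 1) * a ^ (2 * j - 2 * m) * pi ^ (2 * m))
           * zeta (2 * m))"
    unfolding sum_distrib_left
  proof (rule sum.cong)
    fix m assume m: "m \<in> {0..j}"
    define k where "k = 2 * j - 2 * m"
    define F where "F = (fact k :: real)"
    have F: "F \<noteq> 0" by (simp add: F_def)
    have s: "(-1::real)^(j-m) = (-1)^(j+1) * (-1)^(m+1)" using m by (intro sign_lem) auto
    show "P * 2 * ((-1)^(j-m) * (1/a)^(2*j-2*m) / fact (2*j-2*m) * (zeta (2 * real m) * (1/(2*pi))^(2*m)))
      = (-1) ^ (j + 1) * P * ((-1) ^ (m + 1) /
           (fact (2 * j - 2 * m) * (2::real) powi (2 * int m - 1) * a ^ (2 * j - 2 * m) * pi ^ (2 * m))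
           * zeta (2 * m))"
      unfolding s powi2 k_def[symmetric] F_def[symmetric] using a F
      by (simp add: field_simps power_mult_distrib power_one_over)
  qed simp
  finally show ?thesis by (simp add: P_def)
qed

lemma six: "(6::real)^n = 2^n * 3^n" by (simp flip: power_mult_distrib)

lemma part_a:
  fixes j :: nat assumes j: "j \<ge> 1"
  shows "((3::real) powi (1 - 2 * int j) - 1) * zeta (2 * j) =
      (-1) ^ j * real j * (2 * pi) ^ (2 * j) / (fact (2 * j) * 3 ^ (2 * j - 1))
      + (-1) ^ (j + 1) * (2 * pi) ^ (2 * j) *
        (\<Sum>m = 0..j. (-1) ^ (m + 1) /
           (fact (2 * j - 2 * m) * (2::real) powi (2 * int m - 1) * 3 ^ (2 * j - 2 * m) * pi ^ (2 * m))
           * zeta (2 * m))"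
proof (rule final_abc[OF j])
  show "(3::real) > 0" by simp
  have e: "fps_nth FA_L (2*j) = fps_nth FA_R (2*j)" using FA by simp
  have L: "fps_nth FA_L (2*j) = ((3::real) powi (1 - 2 * int j) - 1) * zeta (2 * real j) * (1/(2*pi))^(2*j)"
    unfolding FA_L_def fps_sub_nth fps_mult_left_const_nth Wc_nth powi_1m[of 3 j, simplified]
    by (simp add: field_simps power_mult_distrib six)
  have R: "fps_nth FA_R (2*j) = - 1 / 2 * ((-1)^(j-1) * (1/3)^(2*j-1) / fact (2*j-1))
      + 2 * (\<Sum>m=0..j. (-1)^(j-m) * (1/3)^(2*j-2*m) / fact (2*j-2*m) * (zeta (2 * real m) * (1/(2*pi))^(2*m)))"
    unfolding FA_R_def fps_add_nth fps_mult_left_const_nth coeff_Xsin[OF j] coeff_CW by simp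
  show "((3::real) powi (1 - 2 * int j) - 1) * zeta (2 * real j) * (1/(2*pi))^(2*j) =
      - 1 / 2 * ((-1)^(j-1) * (1/3)^(2*j-1) / fact (2*j-1))
      + 2 * (\<Sum>m=0..j. (-1)^(j-m) * (1/3)^(2*j-2*m) / fact (2*j-2*m) * (zeta (2 * real m) * (1/(2*pi))^(2*m)))"
    using e L R by simp
qed

lemma four: "(4::real)^n = 2^n * 2^n" by (simp flip: power_mult_distrib)
lemma eight: "(8::real)^n = 2^n * 4^n" by (simp flip: power_mult_distrib)
lemma twelve: "(12::real)^n = 3^n * 4^n" by (simp flip: power_mult_distrib)

lemma final_de:
  fixes C a b :: real and j :: nat
  assumes j: "j \<ge> 1" and a: "a > 0"
  assumes hyp: "1/2 * ((-1)^(j-1) * (1/a)^(2*j-1) / fact (2*j-1)) + 1/2 * ((-1)^(j-1) * (b/a)^(2*j-1) / fact (2*j-1))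
      - 2 * (\<Sum>m=0..j. (-1)^(j-m) * (1/a)^(2*j-2*m) / fact (2*j-2*m) * (zeta (2 * real m) * (1/(2*pi))^(2*m)))
      - 2 * (\<Sum>m=0..j. (-1)^(j-m) * (b/a)^(2*j-2*m) / fact (2*j-2*m) * (zeta (2 * real m) * (1/(2*pi))^(2*m)))
      = - 2 * (C * zeta (2 * real j) * (1/(4*pi))^(2*j))"
  shows "- real j / a ^ (2 * j - 1) * (1 + b ^ (2 * j - 1)) +
      (\<Sum>m = 0..j. fact (2 * j) / fact (2 * j - 2 * m) *
          ((-1) ^ (m + 1) / ((2::real) powi (2 * int m - 1) * pi ^ (2 * m))) *
          (1 + b ^ (2 * j - 2 * m)) * (zeta (2 * m) / a ^ (2 * j - 2 * m)))
    = C * fact (2 * j) * (-1) ^ (j + 1) / (2 ^ (4 * j - 1) * pi ^ (2 * j)) * zeta (2 * j)"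
proof -
  define M where "M = (-1::real)^j * fact (2*j)"
  define T where "T = 1/2 * ((-1)^(j-1) * (1/a)^(2*j-1) / fact (2*j-1)) + 1/2 * ((-1)^(j-1) * (b/a)^(2*j-1) / fact (2*j-1))"
  have sg: "(-1::real)^j * (-1)^j = 1" by (simp flip: power_add)
  have c1: "M * T = - real j / a ^ (2 * j - 1) * (1 + b ^ (2 * j - 1))"
  proof -
    have f: "(fact (2*j) :: real) = of_nat (2*j) * fact (2*j - 1)" by (rule fact_reduce) (use j in simp)
    have s1: "(-1::real)^(j-1) = -((-1)^j)"
    proof -
      obtain k where k: "j = Suc k" using j by (cases j) auto
      thus ?thesis by simp
    qed
    define F where "F = (fact (2*j - 1) :: real)"
    define Q where "Q = a^(2*j-1)"
    define B where "B = b^(2*j-1)"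
    define S where "S = (-1::real)^j"
    have nz: "F \<noteq> 0" "Q \<noteq> 0" "real j \<noteq> 0" using a j by (auto simp: F_def Q_def)
    have S: "S * S = 1" using sg by (simp add: S_def)
    have S2: "S * (S * z) = z" for z using S by (metis mult.assoc mult_1)
    show ?thesis unfolding M_def T_def f s1 power_divide F_def[symmetric] Q_def[symmetric] B_def[symmetric]
        S_def[symmetric] power_one_over using nz
      by (simp add: field_simps S2)
  qed
  have c2: "M * (- 2 * (\<Sum>m=0..j. (-1)^(j-m) * (1/a)^(2*j-2*m) / fact (2*j-2*m) * (zeta (2 * real m) * (1/(2*pi))^(2*m)))
      - 2 * (\<Sum>m=0..j. (-1)^(j-m) * (b/a)^(2*j-2*m) / fact (2*j-2*m) * (zeta (2 * real m) * (1/(2*pi))^(2*m))))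
    = (\<Sum>m = 0..j. fact (2 * j) / fact (2 * j - 2 * m) *
          ((-1) ^ (m + 1) / ((2::real) powi (2 * int m - 1) * pi ^ (2 * m))) *
          (1 + b ^ (2 * j - 2 * m)) * (zeta (2 * m) / a ^ (2 * j - 2 * m)))"
    unfolding sum_distrib_left sum_subtractf[symmetric] right_diff_distrib
  proof (rule sum.cong)
    fix m assume m: "m \<in> {0..j}"
    define k where "k = 2 * j - 2 * m"
    define F where "F = (fact k :: real)"
    define G where "G = (fact (2*j) :: real)"
    define S where "S = (-1::real)^j"
    have F: "F \<noteq> 0" by (simp add: F_def)
    have S: "S * S = 1" using sg by (simp add: S_def)
    have S2: "S * (S * z) = z" for z using S by (metis mult.assoc mult_1)
    have s: "(-1::real)^(j-m) = (-1)^(j+1) * (-1)^(m+1)" using m by (intro sign_lem) auto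
    show "M * (- 2 * ((-1)^(j-m) * (1/a)^(2*j-2*m) / fact (2*j-2*m) * (zeta (2 * real m) * (1/(2*pi))^(2*m))))
      - M * (2 * ((-1)^(j-m) * (b/a)^(2*j-2*m) / fact (2*j-2*m) * (zeta (2 * real m) * (1/(2*pi))^(2*m))))
      = fact (2 * j) / fact (2 * j - 2 * m) *
          ((-1) ^ (m + 1) / ((2::real) powi (2 * int m - 1) * pi ^ (2 * m))) *
          (1 + b ^ (2 * j - 2 * m)) * (zeta (2 * m) / a ^ (2 * j - 2 * m))"
      unfolding s powi2 M_def k_def[symmetric] F_def[symmetric] G_def[symmetric] power_add S_def[symmetric] using a F
      by (simp add: field_simps power_mult_distrib power_one_over power_divide S2)
  qed simp
  have c3: "M * (- 2 * (C * zeta (2 * real j) * (1/(4*pi))^(2*j))) = C * fact (2 * j) * (-1) ^ (j + 1) / (2 ^ (4 * j - 1) * pi ^ (2 * j)) * zeta (2 * j)"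
  proof -
    have p: "(2::real)^(4*j-1) = 2^(4*j) / 2"
    proof -
      obtain k where k: "j = Suc k" using j by (cases j) auto
      have "4*j - 1 = Suc (4*k + 2)" "4 * j = Suc (Suc (4*k + 2))" using k by simp_all
      thus ?thesis by simp
    qed
    have p2: "(4::real)^(2*j) = 2^(4*j)"
    proof -
      have "(4::real)^(2*j) = (2^2)^(2*j)" by simp
      also have "\<dots> = 2^(2*(2*j))" by (rule power_mult[symmetric])
      also have "2*(2*j) = 4*j" by simp
      finally show ?thesis .
    qed
    show ?thesis unfolding M_def p power_one_over power_mult_distrib p2 power_add by (simp add: field_simps)
  qed
  have h2: "T + (- 2 * (\<Sum>m=0..j. (-1)^(j-m) * (1/a)^(2*j-2*m) / fact (2*j-2*m) * (zeta (2 * real m) * (1/(2*pi))^(2*m)))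
      - 2 * (\<Sum>m=0..j. (-1)^(j-m) * (b/a)^(2*j-2*m) / fact (2*j-2*m) * (zeta (2 * real m) * (1/(2*pi))^(2*m))))
      = - 2 * (C * zeta (2 * real j) * (1/(4*pi))^(2*j))"
    using hyp unfolding T_def by (simp only: diff_conv_add_uminus add.assoc mult_minus_left)
  have "M * (T + (- 2 * (\<Sum>m=0..j. (-1)^(j-m) * (1/a)^(2*j-2*m) / fact (2*j-2*m) * (zeta (2 * real m) * (1/(2*pi))^(2*m)))
      - 2 * (\<Sum>m=0..j. (-1)^(j-m) * (b/a)^(2*j-2*m) / fact (2*j-2*m) * (zeta (2 * real m) * (1/(2*pi))^(2*m)))))
      = M * (- 2 * (C * zeta (2 * real j) * (1/(4*pi))^(2*j)))"
    by (simp only: h2)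
  thus ?thesis unfolding distrib_left c1 c2 c3 .
qed

definition FB_L where "FB_L = fps_const 4 * Wc (1/4) - fps_const 2 * Wc (1/2)"
definition FB_R where "FB_R = fps_const (- 1 / 2) * (fps_X * fps_sin (1/4)) + fps_const 2 * (fps_cos (1/4) * Wc 1)"

lemma FB: "FB_L = FB_R"
proof (rule fps_real_eq[of pi])
  show "ereal pi \<le> fps_conv_radius FB_L" unfolding FB_L_def by (intro rad_intros) auto
  show "ereal pi \<le> fps_conv_radius FB_R" unfolding FB_R_def by (intro rad_intros) auto
  fix x :: real assume x: "\<bar>x\<bar> < pi"
  show "eval_fps FB_L x = eval_fps FB_R x"
    unfolding FB_L_def FB_R_def
    using x id_b[OF x]
    by (simp add: ev_mult ev_add ev_diff rad_intros Wc_eval')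
qed (use pi_gt_zero in auto)

lemma part_b:
  fixes j :: nat assumes j: "j \<ge> 1"
  shows "((4::real) powi (1 - 2 * int j) - 2 powi (1 - 2 * int j)) * zeta (2 * j) =
      (-1) ^ j * real j * (2 * pi) ^ (2 * j) / (fact (2 * j) * 4 ^ (2 * j - 1))
      + (-1) ^ (j + 1) * (2 * pi) ^ (2 * j) *
        (\<Sum>m = 0..j. (-1) ^ (m + 1) /
           (fact (2 * j - 2 * m) * (2::real) powi (2 * int m - 1) * 4 ^ (2 * j - 2 * m) * pi ^ (2 * m))
           * zeta (2 * m))"
proof (rule final_abc[OF j])
  show "(4::real) > 0" by simp
  have e: "fps_nth FB_L (2*j) = fps_nth FB_R (2*j)" using FB by simp
  have L: "fps_nth FB_L (2*j) = ((4::real) powi (1 - 2 * int j) - 2 powi (1 - 2 * int j)) * zeta (2 * real j) * (1/(2*pi))^(2*j)"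
    unfolding FB_L_def fps_sub_nth fps_mult_left_const_nth Wc_nth powi_1m[of 4 j, simplified] powi_1m[of 2 j, simplified]
    by (simp add: field_simps power_mult_distrib four eight)
  have R: "fps_nth FB_R (2*j) = - 1 / 2 * ((-1)^(j-1) * (1/4)^(2*j-1) / fact (2*j-1))
      + 2 * (\<Sum>m=0..j. (-1)^(j-m) * (1/4)^(2*j-2*m) / fact (2*j-2*m) * (zeta (2 * real m) * (1/(2*pi))^(2*m)))"
    unfolding FB_R_def fps_add_nth fps_mult_left_const_nth coeff_Xsin[OF j] coeff_CW by simp
  show "((4::real) powi (1 - 2 * int j) - 2 powi (1 - 2 * int j)) * zeta (2 * real j) * (1/(2*pi))^(2*j) =
      - 1 / 2 * ((-1)^(j-1) * (1/4)^(2*j-1) / fact (2*j-1))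
      + 2 * (\<Sum>m=0..j. (-1)^(j-m) * (1/4)^(2*j-2*m) / fact (2*j-2*m) * (zeta (2 * real m) * (1/(2*pi))^(2*m)))"
    using e L R by simp
qed

definition FC_L where "FC_L = fps_const 6 * Wc (1/6) - fps_const 3 * Wc (1/3) - fps_const 2 * Wc (1/2) + Wc 1"
definition FC_R where "FC_R = fps_const (- 1 / 2) * (fps_X * fps_sin (1/6)) + fps_const 2 * (fps_cos (1/6) * Wc 1)"

lemma FC: "FC_L = FC_R"
proof (rule fps_real_eq[of pi])
  show "ereal pi \<le> fps_conv_radius FC_L" unfolding FC_L_def by (intro rad_intros) auto
  show "ereal pi \<le> fps_conv_radius FC_R" unfolding FC_R_def by (intro rad_intros) auto
  fix x :: real assume x: "\<bar>x\<bar> < pi"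
  show "eval_fps FC_L x = eval_fps FC_R x"
    unfolding FC_L_def FC_R_def
    using x id_c[OF x]
    by (simp add: ev_mult ev_add ev_diff rad_intros Wc_eval')
qed (use pi_gt_zero in auto)

lemma part_c:
  fixes j :: nat assumes j: "j \<ge> 1"
  shows "((6::real) powi (1 - 2 * int j) - 3 powi (1 - 2 * int j) - 2 powi (1 - 2 * int j) + 1) * zeta (2 * j) =
      (-1) ^ j * real j * (2 * pi) ^ (2 * j) / (fact (2 * j) * 6 ^ (2 * j - 1))
      + (-1) ^ (j + 1) * (2 * pi) ^ (2 * j) *
        (\<Sum>m = 0..j. (-1) ^ (m + 1) /
           (fact (2 * j - 2 * m) * (2::real) powi (2 * int m - 1) * 6 ^ (2 * j - 2 * m) * pi ^ (2 * m))
           * zeta (2 * m))"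
proof (rule final_abc[OF j])
  show "(6::real) > 0" by simp
  have e: "fps_nth FC_L (2*j) = fps_nth FC_R (2*j)" using FC by simp
  have L: "fps_nth FC_L (2*j) = ((6::real) powi (1 - 2 * int j) - 3 powi (1 - 2 * int j) - 2 powi (1 - 2 * int j) + 1) * zeta (2 * real j) * (1/(2*pi))^(2*j)"
    unfolding FC_L_def fps_sub_nth fps_add_nth fps_mult_left_const_nth Wc_nth powi_1m[of 6 j, simplified]
      powi_1m[of 3 j, simplified] powi_1m[of 2 j, simplified]
    by (simp add: field_simps power_mult_distrib six four twelve)
  have R: "fps_nth FC_R (2*j) = - 1 / 2 * ((-1)^(j-1) * (1/6)^(2*j-1) / fact (2*j-1))
      + 2 * (\<Sum>m=0..j. (-1)^(j-m) * (1/6)^(2*j-2*m) / fact (2*j-2*m) * (zeta (2 * real m) * (1/(2*pi))^(2*m)))"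
    unfolding FC_R_def fps_add_nth fps_mult_left_const_nth coeff_Xsin[OF j] coeff_CW by simp
  show "((6::real) powi (1 - 2 * int j) - 3 powi (1 - 2 * int j) - 2 powi (1 - 2 * int j) + 1) * zeta (2 * real j) * (1/(2*pi))^(2*j) =
      - 1 / 2 * ((-1)^(j-1) * (1/6)^(2*j-1) / fact (2*j-1))
      + 2 * (\<Sum>m=0..j. (-1)^(j-m) * (1/6)^(2*j-2*m) / fact (2*j-2*m) * (zeta (2 * real m) * (1/(2*pi))^(2*m)))"
    using e L R by simp
qed

lemma sixteen: "(16::real)^n = 4^n * 4^n" by (simp flip: power_mult_distrib)
lemma tfour: "(24::real)^n = 3^n * 8^n" by (simp flip: power_mult_distrib)

definition FD_L where "FD_L = fps_const (1/2) * (fps_X * fps_sin (1/12)) + fps_const (1/2) * (fps_X * fps_sin (7/12))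
   - fps_const 2 * (fps_cos (1/12) * Wc 1) - fps_const 2 * (fps_cos (7/12) * Wc 1)"
definition FD_R where "FD_R = fps_const (- 2) * (fps_const 6 * Wc (1/12) - fps_const 3 * Wc (1/6) - fps_const 2 * Wc (1/4) + Wc (1/2))"

lemma FD: "FD_L = FD_R"
proof (rule fps_real_eq[of pi])
  show "ereal pi \<le> fps_conv_radius FD_L" unfolding FD_L_def by (intro rad_intros) auto
  show "ereal pi \<le> fps_conv_radius FD_R" unfolding FD_R_def by (intro rad_intros) auto
  fix x :: real assume x: "\<bar>x\<bar> < pi"
  show "eval_fps FD_L x = eval_fps FD_R x"
    unfolding FD_L_def FD_R_def
    using x id_d[OF x]
    by (simp add: ev_mult ev_add ev_diff rad_intros Wc_eval' algebra_simps)
qed (use pi_gt_zero in auto)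

lemma part_d:
  fixes j :: nat assumes j: "j \<ge> 1"
  shows "- real j / 12 ^ (2 * j - 1) * (1 + 7 ^ (2 * j - 1)) +
      (\<Sum>m = 0..j. fact (2 * j) / fact (2 * j - 2 * m) *
          ((-1) ^ (m + 1) / ((2::real) powi (2 * int m - 1) * pi ^ (2 * m))) *
          (1 + 7 ^ (2 * j - 2 * m)) * (zeta (2 * m) / 12 ^ (2 * j - 2 * m)))
    = ((6::real) powi (1 - 2 * int j) - 3 powi (1 - 2 * int j) - 2 powi (1 - 2 * int j) + 1)
        * fact (2 * j) * (-1) ^ (j + 1) / (2 ^ (4 * j - 1) * pi ^ (2 * j)) * zeta (2 * j)"
proof (rule final_de[OF j])
  show "(12::real) > 0" by simp
  have e: "fps_nth FD_L (2*j) = fps_nth FD_R (2*j)" using FD by simp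
  have R: "fps_nth FD_R (2*j) = - 2 * (((6::real) powi (1 - 2 * int j) - 3 powi (1 - 2 * int j) - 2 powi (1 - 2 * int j) + 1) * zeta (2 * real j) * (1/(4*pi))^(2*j))"
    unfolding FD_R_def fps_sub_nth fps_add_nth fps_mult_left_const_nth Wc_nth powi_1m[of 6 j, simplified]
      powi_1m[of 3 j, simplified] powi_1m[of 2 j, simplified]
    by (simp add: field_simps power_mult_distrib six four twelve eight sixteen tfour)
  have L: "fps_nth FD_L (2*j) = 1/2 * ((-1)^(j-1) * (1/12)^(2*j-1) / fact (2*j-1)) + 1/2 * ((-1)^(j-1) * (7/12)^(2*j-1) / fact (2*j-1))
      - 2 * (\<Sum>m=0..j. (-1)^(j-m) * (1/12)^(2*j-2*m) / fact (2*j-2*m) * (zeta (2 * real m) * (1/(2*pi))^(2*m)))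
      - 2 * (\<Sum>m=0..j. (-1)^(j-m) * (7/12)^(2*j-2*m) / fact (2*j-2*m) * (zeta (2 * real m) * (1/(2*pi))^(2*m)))"
    unfolding FD_L_def fps_add_nth fps_sub_nth fps_mult_left_const_nth coeff_Xsin[OF j] coeff_CW by simp
  show "1/2 * ((-1)^(j-1) * (1/12)^(2*j-1) / fact (2*j-1)) + 1/2 * ((-1)^(j-1) * (7/12)^(2*j-1) / fact (2*j-1))
      - 2 * (\<Sum>m=0..j. (-1)^(j-m) * (1/12)^(2*j-2*m) / fact (2*j-2*m) * (zeta (2 * real m) * (1/(2*pi))^(2*m)))
      - 2 * (\<Sum>m=0..j. (-1)^(j-m) * (7/12)^(2*j-2*m) / fact (2*j-2*m) * (zeta (2 * real m) * (1/(2*pi))^(2*m)))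
      = - 2 * (((6::real) powi (1 - 2 * int j) - 3 powi (1 - 2 * int j) - 2 powi (1 - 2 * int j) + 1) * zeta (2 * real j) * (1/(4*pi))^(2*j))"
    using e L R by simp
qed

definition FE_L where "FE_L = fps_const (1/2) * (fps_X * fps_sin (1/8)) + fps_const (1/2) * (fps_X * fps_sin (5/8))
   - fps_const 2 * (fps_cos (1/8) * Wc 1) - fps_const 2 * (fps_cos (5/8) * Wc 1)"
definition FE_R where "FE_R = fps_const (- 2) * (fps_const 4 * Wc (1/8) - fps_const 2 * Wc (1/4))"

lemma FE: "FE_L = FE_R"
proof (rule fps_real_eq[of pi])
  show "ereal pi \<le> fps_conv_radius FE_L" unfolding FE_L_def by (intro rad_intros) auto
  show "ereal pi \<le> fps_conv_radius FE_R" unfolding FE_R_def by (intro rad_intros) auto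
  fix x :: real assume x: "\<bar>x\<bar> < pi"
  show "eval_fps FE_L x = eval_fps FE_R x"
    unfolding FE_L_def FE_R_def
    using x id_e[OF x]
    by (simp add: ev_mult ev_add ev_diff rad_intros Wc_eval' algebra_simps)
qed (use pi_gt_zero in auto)

lemma part_e:
  fixes j :: nat assumes j: "j \<ge> 1"
  shows "- real j / 8 ^ (2 * j - 1) * (1 + 5 ^ (2 * j - 1)) +
      (\<Sum>m = 0..j. fact (2 * j) / fact (2 * j - 2 * m) *
          ((-1) ^ (m + 1) / ((2::real) powi (2 * int m - 1) * pi ^ (2 * m))) *
          (1 + 5 ^ (2 * j - 2 * m)) * (zeta (2 * m) / 8 ^ (2 * j - 2 * m)))
    = ((4::real) powi (1 - 2 * int j) - 2 powi (1 - 2 * int j))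
        * fact (2 * j) * (-1) ^ (j + 1) / (2 ^ (4 * j - 1) * pi ^ (2 * j)) * zeta (2 * j)"
proof (rule final_de[OF j])
  show "(8::real) > 0" by simp
  have e: "fps_nth FE_L (2*j) = fps_nth FE_R (2*j)" using FE by simp
  have R: "fps_nth FE_R (2*j) = - 2 * (((4::real) powi (1 - 2 * int j) - 2 powi (1 - 2 * int j)) * zeta (2 * real j) * (1/(4*pi))^(2*j))"
    unfolding FE_R_def fps_sub_nth fps_add_nth fps_mult_left_const_nth Wc_nth powi_1m[of 4 j, simplified]
      powi_1m[of 2 j, simplified]
    by (simp add: field_simps power_mult_distrib four eight sixteen)
  have L: "fps_nth FE_L (2*j) = 1/2 * ((-1)^(j-1) * (1/8)^(2*j-1) / fact (2*j-1)) + 1/2 * ((-1)^(j-1) * (5/8)^(2*j-1) / fact (2*j-1))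
      - 2 * (\<Sum>m=0..j. (-1)^(j-m) * (1/8)^(2*j-2*m) / fact (2*j-2*m) * (zeta (2 * real m) * (1/(2*pi))^(2*m)))
      - 2 * (\<Sum>m=0..j. (-1)^(j-m) * (5/8)^(2*j-2*m) / fact (2*j-2*m) * (zeta (2 * real m) * (1/(2*pi))^(2*m)))"
    unfolding FE_L_def fps_add_nth fps_sub_nth fps_mult_left_const_nth coeff_Xsin[OF j] coeff_CW by simp
  show "1/2 * ((-1)^(j-1) * (1/8)^(2*j-1) / fact (2*j-1)) + 1/2 * ((-1)^(j-1) * (5/8)^(2*j-1) / fact (2*j-1))
      - 2 * (\<Sum>m=0..j. (-1)^(j-m) * (1/8)^(2*j-2*m) / fact (2*j-2*m) * (zeta (2 * real m) * (1/(2*pi))^(2*m)))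
      - 2 * (\<Sum>m=0..j. (-1)^(j-m) * (5/8)^(2*j-2*m) / fact (2*j-2*m) * (zeta (2 * real m) * (1/(2*pi))^(2*m)))
      = - 2 * (((4::real) powi (1 - 2 * int j) - 2 powi (1 - 2 * int j)) * zeta (2 * real j) * (1/(4*pi))^(2*j))"
    using e L R by simp
qed


theorem theorem1:
  fixes j :: nat
  assumes "j \<ge> 1"
  shows
   "(((3::real) powi (1 - 2 * int j) - 1) * zeta (2 * j) =
      (-1) ^ j * real j * (2 * pi) ^ (2 * j) / (fact (2 * j) * 3 ^ (2 * j - 1))
      + (-1) ^ (j + 1) * (2 * pi) ^ (2 * j) *
        (\<Sum>m = 0..j. (-1) ^ (m + 1) /
           (fact (2 * j - 2 * m) * (2::real) powi (2 * int m - 1) * 3 ^ (2 * j - 2 * m) * pi ^ (2 * m))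
           * zeta (2 * m)))
  \<and> (((4::real) powi (1 - 2 * int j) - 2 powi (1 - 2 * int j)) * zeta (2 * j) =
      (-1) ^ j * real j * (2 * pi) ^ (2 * j) / (fact (2 * j) * 4 ^ (2 * j - 1))
      + (-1) ^ (j + 1) * (2 * pi) ^ (2 * j) *
        (\<Sum>m = 0..j. (-1) ^ (m + 1) /
           (fact (2 * j - 2 * m) * (2::real) powi (2 * int m - 1) * 4 ^ (2 * j - 2 * m) * pi ^ (2 * m))
           * zeta (2 * m)))
  \<and> (((6::real) powi (1 - 2 * int j) - 3 powi (1 - 2 * int j) - 2 powi (1 - 2 * int j) + 1) * zeta (2 * j) =
      (-1) ^ j * real j * (2 * pi) ^ (2 * j) / (fact (2 * j) * 6 ^ (2 * j - 1))
      + (-1) ^ (j + 1) * (2 * pi) ^ (2 * j) *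
        (\<Sum>m = 0..j. (-1) ^ (m + 1) /
           (fact (2 * j - 2 * m) * (2::real) powi (2 * int m - 1) * 6 ^ (2 * j - 2 * m) * pi ^ (2 * m))
           * zeta (2 * m)))
  \<and> (- real j / 12 ^ (2 * j - 1) * (1 + 7 ^ (2 * j - 1)) +
      (\<Sum>m = 0..j. fact (2 * j) / fact (2 * j - 2 * m) *
          ((-1) ^ (m + 1) / ((2::real) powi (2 * int m - 1) * pi ^ (2 * m))) *
          (1 + 7 ^ (2 * j - 2 * m)) * (zeta (2 * m) / 12 ^ (2 * j - 2 * m)))
    = ((6::real) powi (1 - 2 * int j) - 3 powi (1 - 2 * int j) - 2 powi (1 - 2 * int j) + 1)
        * fact (2 * j) * (-1) ^ (j + 1) / (2 ^ (4 * j - 1) * pi ^ (2 * j)) * zeta (2 * j))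
  \<and> (- real j / 8 ^ (2 * j - 1) * (1 + 5 ^ (2 * j - 1)) +
      (\<Sum>m = 0..j. fact (2 * j) / fact (2 * j - 2 * m) *
          ((-1) ^ (m + 1) / ((2::real) powi (2 * int m - 1) * pi ^ (2 * m))) *
          (1 + 5 ^ (2 * j - 2 * m)) * (zeta (2 * m) / 8 ^ (2 * j - 2 * m)))
    = ((4::real) powi (1 - 2 * int j) - 2 powi (1 - 2 * int j))
        * fact (2 * j) * (-1) ^ (j + 1) / (2 ^ (4 * j - 1) * pi ^ (2 * j)) * zeta (2 * j))"
  using part_a[OF assms] part_b[OF assms] part_c[OF assms] part_d[OF assms] part_e[OF assms]
  by (intro conjI)

end
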